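(* The set $\mathcal{B}_{2,3,4}$ consisting of the identities (M1) $(xy)(zt)=(xz)(yt)$, (M2) $(xy)(zt)=(ty)(zx)$, (M3) $((xy)z)t=((xt)z)y$, (M4) $(x(yz))t=(x(tz))y$, (M5) $x((yz)t)=z((yx)t)$, (M6) $x(y(zt))=z(y(xt))$, and $(xy^2)y^2=x$ is a basis for $\Sigma_{2,3,4}$.
   Context: $y^2$ denotes $yy$. $\Sigma_{2,3,4}$ is the set of groupoid identities satisfied in the integers $\mathbb{Z}$ by each of the binary operations $x-y$, $-x+y$ and $-x-y$. A basis is a set of identities whose equational consequences are exactly $\Sigma_{2,3,4}$. *)

theory Defs
  imports Main
begin

datatype gterm = Var nat | App gterm gterm

fun eval :: "(int \<Rightarrow> int \<Rightarrow> int) \<Rightarrow> (nat \<Rightarrow> int) \<Rightarrow> gterm \<Rightarrow> int" where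
  "eval f \<rho> (Var n) = \<rho> n"
| "eval f \<rho> (App s t) = f (eval f \<rho> s) (eval f \<rho> t)"

fun subst :: "(nat \<Rightarrow> gterm) \<Rightarrow> gterm \<Rightarrow> gterm" where
  "subst \<sigma> (Var n) = \<sigma> n"
| "subst \<sigma> (App s t) = App (subst \<sigma> s) (subst \<sigma> t)"

definition satisfies :: "(int \<Rightarrow> int \<Rightarrow> int) \<Rightarrow> gterm \<times> gterm \<Rightarrow> bool" where
  "satisfies f e \<longleftrightarrow> (\<forall>\<rho>. eval f \<rho> (fst e) = eval f \<rho> (snd e))"

definition Sigma234 :: "(gterm \<times> gterm) set" where
  "Sigma234 = {e. satisfies (\<lambda>a b. a - b) e \<and> satisfies (\<lambda>a b. - a + b) e
                 \<and> satisfies (\<lambda>a b. - a - b) e}"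

inductive derivable :: "(gterm \<times> gterm) set \<Rightarrow> gterm \<Rightarrow> gterm \<Rightarrow> bool" for E where
  ax: "(s, t) \<in> E \<Longrightarrow> derivable E s t"
| refl: "derivable E s s"
| sym: "derivable E s t \<Longrightarrow> derivable E t s"
| trans: "derivable E s t \<Longrightarrow> derivable E t u \<Longrightarrow> derivable E s u"
| inst: "derivable E s t \<Longrightarrow> derivable E (subst \<sigma> s) (subst \<sigma> t)"
| cong: "derivable E s1 t1 \<Longrightarrow> derivable E s2 t2 \<Longrightarrow> derivable E (App s1 s2) (App t1 t2)"

definition consequences :: "(gterm \<times> gterm) set \<Rightarrow> (gterm \<times> gterm) set" where
  "consequences E = {(s, t). derivable E s t}"

definition is_basis_of :: "(gterm \<times> gterm) set \<Rightarrow> (gterm \<times> gterm) set \<Rightarrow> bool" where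
  "is_basis_of E \<Sigma> \<longleftrightarrow> consequences E = \<Sigma>"

abbreviation vx where "vx \<equiv> Var 0"
abbreviation vy where "vy \<equiv> Var 1"
abbreviation vz where "vz \<equiv> Var 2"
abbreviation vt where "vt \<equiv> Var 3"

definition B234 :: "(gterm \<times> gterm) set" where
  "B234 = {
    (App (App vx vy) (App vz vt), App (App vx vz) (App vy vt)),
    (App (App vx vy) (App vz vt), App (App vt vy) (App vz vx)),
    (App (App (App vx vy) vz) vt, App (App (App vx vt) vz) vy),
    (App (App vx (App vy vz)) vt, App (App vx (App vt vz)) vy),
    (App vx (App (App vy vz) vt), App vz (App (App vy vx) vt)),
    (App vx (App vy (App vz vt)), App vz (App vy (App vx vt))),
    (App (App vx (App vy vy)) (App vy vy), vx)}"

end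

theory Submission
  imports Defs
begin

lemma eval_subst: "eval f \<rho> (subst \<sigma> s) = eval f (\<lambda>n. eval f \<rho> (\<sigma> n)) s"
  by (induction s) auto

lemma sound_aux:
  assumes "derivable B234 s t"
    and ops: "\<And>u v w z. f (f u v) (f w z) = f (f u w) (f v z)"
    "\<And>u v w z. f (f u v) (f w z) = f (f z v) (f w u)"
    "\<And>u v w z. f (f (f u v) w) z = f (f (f u z) w) v"
    "\<And>u v w z. f (f u (f v w)) z = f (f u (f z w)) v"
    "\<And>u v w z. f u (f (f v w) z) = f w (f (f v u) z)"
    "\<And>u v w z. f u (f v (f w z)) = f w (f v (f u z))"
    "\<And>u v. f (f u (f v v)) (f v v) = u"
  shows "eval f \<rho> s = eval f \<rho> t"
  using assms(1)
proof (induction arbitrary: \<rho>)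
  case (ax s t)
  then show ?case using ops by (auto simp: B234_def)
next
  case (inst s t \<sigma>)
  then show ?case by (simp add: eval_subst)
qed auto

lemma soundness: "derivable B234 s t \<Longrightarrow> (s, t) \<in> Sigma234"
  unfolding Sigma234_def satisfies_def
  by (auto intro!: sound_aux[of s t] simp: algebra_simps)

section \<open>The term algebra modulo B234\<close>

lemma derivable_equivp: "equivp (derivable B234)"
  by (rule equivpI) (auto simp: reflp_def symp_def transp_def intro: derivable.intros)

quotient_type q = gterm / "derivable B234" by (rule derivable_equivp)

lift_definition app :: "q \<Rightarrow> q \<Rightarrow> q" is App by (rule derivable.cong)
lift_definition var :: "nat \<Rightarrow> q" is Var .

fun evv :: "(nat \<Rightarrow> q) \<Rightarrow> gterm \<Rightarrow> q" where
  "evv \<rho> (Var n) = \<rho> n"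
| "evv \<rho> (App s t) = app (evv \<rho> s) (evv \<rho> t)"

lemma abs_evv: "abs_q t = evv var t"
proof (induction t)
  case (App t1 t2)
  have "abs_q (App t1 t2) = app (abs_q t1) (abs_q t2)" by (metis app.abs_eq)
  then show ?case using App by simp
qed (simp add: var.abs_eq)

lemma axi: "(l, r) \<in> B234 \<Longrightarrow> derivable B234 (subst \<sigma> l) (subst \<sigma> r)"
  by (intro derivable.inst derivable.ax)

definition s4 :: "gterm \<Rightarrow> gterm \<Rightarrow> gterm \<Rightarrow> gterm \<Rightarrow> nat \<Rightarrow> gterm" where
  "s4 a b c d = (\<lambda>n. if n = 0 then a else if n = 1 then b else if n = 2 then c else d)"

lemma M1: "app (app x y) (app z t) = app (app x z) (app y t)"
  apply transfer
  subgoal for x y z t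
    using axi[of "App (App vx vy) (App vz vt)" "App (App vx vz) (App vy vt)" "s4 x y z t"]
    by (simp add: B234_def s4_def)
  done

lemma M2: "app (app x y) (app z t) = app (app t y) (app z x)"
  apply transfer
  subgoal for x y z t
    using axi[of "App (App vx vy) (App vz vt)" "App (App vt vy) (App vz vx)" "s4 x y z t"]
    by (simp add: B234_def s4_def)
  done

lemma A7: "app (app x (app y y)) (app y y) = x"
  apply transfer
  subgoal for x y
    using axi[of "App (App vx (App vy vy)) (App vy vy)" vx "s4 x y x x"]
    by (simp add: B234_def s4_def)
  done


section \<open>Mal'cev term and commutation\<close>

definition pp :: "q \<Rightarrow> q \<Rightarrow> q \<Rightarrow> q" where
  "pp x y z = app (app x (app y y)) (app y z)"

lemma P1: "pp x y y = x" by (simp add: pp_def A7)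
lemma P2: "pp y y z = z" unfolding pp_def by (simp add: M2[of y "app y y" y z] A7)

lemma comm_app: "evv (\<lambda>i. app (f i) (g i)) T = app (evv f T) (evv g T)"
  by (induction T) (simp_all add: M1)

definition PT :: gterm where
  "PT = App (App (Var 0) (App (Var 1) (Var 1))) (App (Var 1) (Var 2))"

lemma evv_PT: "evv \<rho> PT = pp (\<rho> 0) (\<rho> 1) (\<rho> 2)" by (simp add: PT_def pp_def)

lemma P4: "app (pp a b c) (pp d e f) = pp (app a d) (app b e) (app c f)"
  using comm_app[of "\<lambda>i. if i=0 then a else if i=1 then b else c"
      "\<lambda>i. if i=0 then d else if i=1 then e else f" PT]
  by (simp add: evv_PT)

lemma comm_pp: "evv (\<lambda>i. pp (f i) (g i) (h i)) T = pp (evv f T) (evv g T) (evv h T)"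
  by (induction T) (simp_all add: P4)

lemma P3: "pp (pp a b c) (pp d e f) (pp g h i) = pp (pp a d g) (pp b e h) (pp c f i)"
  using comm_pp[of "\<lambda>j. if j=0 then a else if j=1 then d else g"
      "\<lambda>j. if j=0 then b else if j=1 then e else h"
      "\<lambda>j. if j=0 then c else if j=1 then f else i" PT]
  by (simp add: evv_PT)

instantiation q :: ab_group_add
begin
definition zero_q_def: "0 = var 0"
definition plus_q_def: "x + y = pp x 0 y"
definition uminus_q_def: "- x = pp 0 x 0"
definition minus_q_def: "x - y = pp x 0 (pp 0 y (0::q))"
instance proof
  fix a b c :: q
  have "pp (pp a 0 b) 0 c = pp (pp a 0 b) (pp 0 0 0) (pp 0 0 c)" by (simp add: P1 P2)
  also have "\<dots> = pp (pp a 0 0) (pp 0 0 0) (pp b 0 c)" by (rule P3)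
  also have "\<dots> = pp a 0 (pp b 0 c)" by (simp add: P1 P2)
  finally show "a + b + c = a + (b + c)" by (simp add: plus_q_def)
  have "pp a 0 b = pp (pp 0 0 a) (pp 0 0 0) (pp b 0 0)" by (simp add: P1 P2)
  also have "\<dots> = pp (pp 0 0 b) (pp 0 0 0) (pp a 0 0)" by (rule P3)
  also have "\<dots> = pp b 0 a" by (simp add: P1 P2)
  finally show "a + b = b + a" by (simp add: plus_q_def)
  show "0 + a = a" by (simp add: plus_q_def P2)
  have "pp (pp 0 a 0) 0 a = pp (pp 0 a 0) (pp 0 0 0) (pp a 0 0)" by (simp add: P1 P2)
  also have "\<dots> = pp (pp 0 0 a) (pp a 0 0) (pp 0 0 0)" by (rule P3)
  also have "\<dots> = 0" by (simp add: P1 P2)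
  finally show "- a + a = 0" by (simp add: plus_q_def uminus_q_def)
  show "a - b = a + - b" by (simp add: plus_q_def uminus_q_def minus_q_def)
qed
end

lemma pxy0: "pp x y 0 = x - y"
proof -
  have "pp x y 0 = pp (pp x y 0) (pp 0 y y) (pp 0 0 0)" by (simp add: P1 P2)
  also have "\<dots> = pp (pp x 0 0) (pp y y 0) (pp 0 y 0)" by (rule P3)
  also have "\<dots> = x - y" by (simp add: P1 P2 minus_q_def)
  finally show ?thesis .
qed

lemma pxyz: "pp x y z = x - y + z"
proof -
  have "pp x y z = pp (pp x 0 0) (pp y 0 0) (pp 0 0 z)" by (simp add: P1 P2)
  also have "\<dots> = pp (pp x y 0) (pp 0 0 0) (pp 0 0 z)" by (rule P3)
  also have "\<dots> = x - y + z" by (simp add: P1 P2 pxy0 plus_q_def)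
  finally show ?thesis .
qed


section \<open>Affine decomposition and module relations\<close>

definition cc :: q where "cc = app 0 0"
definition al :: "q \<Rightarrow> q" where "al u = app u 0 - cc"
definition be :: "q \<Rightarrow> q" where "be v = app 0 v - cc"

lemma decomp: "app u v = al u + be v + cc"
proof -
  have "app u v = app (pp u 0 0) (pp 0 0 v)" by (simp add: P1 P2)
  also have "\<dots> = pp (app u 0) (app 0 0) (app 0 v)" by (rule P4)
  finally show ?thesis by (simp add: pxyz al_def be_def cc_def algebra_simps)
qed

lemma al_add: "al (x + y) = al x + al y"
proof -
  have "app (x+y) 0 = app (pp x 0 y) (pp 0 0 0)" by (simp add: P1 plus_q_def)
  also have "\<dots> = pp (app x 0) (app 0 0) (app y 0)" by (rule P4)
  finally show ?thesis by (simp add: pxyz al_def cc_def algebra_simps)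
qed

lemma be_add: "be (x + y) = be x + be y"
proof -
  have "app 0 (x+y) = app (pp 0 0 0) (pp x 0 y)" by (simp add: P1 plus_q_def)
  also have "\<dots> = pp (app 0 x) (app 0 0) (app 0 y)" by (rule P4)
  finally show ?thesis by (simp add: pxyz be_def cc_def algebra_simps)
qed

lemma al0: "al 0 = 0" by (simp add: al_def cc_def)
lemma be0: "be 0 = 0" by (simp add: be_def cc_def)

lemma al_minus: "al (- x) = - al x"
  using al_add[of "-x" x] by (simp add: al0 eq_neg_iff_add_eq_0)
lemma be_minus: "be (- x) = - be x"
  using be_add[of "-x" x] by (simp add: be0 eq_neg_iff_add_eq_0)

lemma key1: "al (al x) + al (be cc) + al cc + be cc + cc = x"
proof -
  have "app (app x cc) cc = x" using A7[of x 0] unfolding cc_def[symmetric] .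
  then show ?thesis by (simp add: decomp al_add add.assoc)
qed

lemma Ncc: "al (be cc) + al cc + be cc + cc = 0"
  using key1[of 0] by (simp add: al0 add.assoc)

lemma al_al: "al (al x) = x"
  using key1[of x] Ncc by (simp add: add.assoc)

lemma comm: "be (al x) = al (be x)"
proof -
  have "app (app 0 x) (app 0 0) = app (app 0 0) (app x 0)" by (rule M1)
  then show ?thesis unfolding cc_def[symmetric]
    by (simp add: decomp al_add be_add al0 be0 algebra_simps)
qed

lemma be_be: "be (be x) = x"
proof -
  have "app cc (app cc x) = app (app 0 cc) (app 0 x)" unfolding cc_def by (rule M1)
  also have "\<dots> = app (app x cc) (app 0 0)" by (rule M2)
  also have "\<dots> = x" using A7[of x 0] unfolding cc_def[symmetric] .
  finally have "app cc (app cc x) = x" .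
  then have "be (be x) + (al (be cc) + al cc + be cc + cc) = x"
    by (simp add: decomp al_add be_add comm algebra_simps)
  then show ?thesis using Ncc by simp
qed

lemma Nall: "y + al y + be y + al (be y) = 0"
proof -
  have "app (app x (app y y)) (app y y) = x" by (rule A7)
  then have "x + (y + al y + be y + al (be y)) + (al (be cc) + al cc + be cc + cc) = x"
    by (simp add: decomp al_add be_add comm al_al be_be algebra_simps)
  then show ?thesis using Ncc by simp
qed


section \<open>Counting leaves by class\<close>

type_synonym cls = "bool \<times> bool"

definition amul :: "cls \<Rightarrow> cls" where "amul k = (\<not> fst k, snd k)"
definition bmul :: "cls \<Rightarrow> cls" where "bmul k = (fst k, \<not> snd k)"

fun cnt :: "gterm \<Rightarrow> nat \<Rightarrow> cls \<Rightarrow> nat" where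
  "cnt (Var n) x k = (if n = x \<and> k = (False, False) then 1 else 0)"
| "cnt (App u v) x k = cnt u x (amul k) + cnt v x (bmul k)"

fun icnt :: "gterm \<Rightarrow> cls \<Rightarrow> nat" where
  "icnt (Var n) k = 0"
| "icnt (App u v) k = (if k = (False, False) then 1 else 0) + (icnt u (amul k) + icnt v (bmul k))"

fun tcnt :: "gterm \<Rightarrow> cls \<Rightarrow> nat" where
  "tcnt (Var n) k = (if k = (False, False) then 1 else 0)"
| "tcnt (App u v) k = tcnt u (amul k) + tcnt v (bmul k)"

fun vars :: "gterm \<Rightarrow> nat set" where
  "vars (Var n) = {n}"
| "vars (App u v) = vars u \<union> vars v"

lemma finite_vars: "finite (vars t)" by (induction t) auto

lemma cnt_notin: "x \<notin> vars t \<Longrightarrow> cnt t x k = 0"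
  by (induction t arbitrary: k) auto

lemma cnt_App_fun: "cnt (App u v) x = (\<lambda>k. cnt u x (amul k) + cnt v x (bmul k))" by auto
lemma icnt_App_fun: "icnt (App u v) = (\<lambda>k. (if k = (False, False) then 1 else 0) + (icnt u (amul k) + icnt v (bmul k)))" by auto

primrec nmul :: "nat \<Rightarrow> q \<Rightarrow> q" where
  "nmul 0 y = 0"
| "nmul (Suc n) y = y + nmul n y"

lemma nmul_add: "nmul (m + n) y = nmul m y + nmul n y"
  by (induction m) (simp_all add: add.assoc)
lemma nmul_plus: "nmul n (y + z) = nmul n y + nmul n z"
  by (induction n) (simp_all add: algebra_simps)
lemma nmul_zero: "nmul n 0 = 0"
  by (induction n) simp_all
lemma al_nmul: "al (nmul n y) = nmul n (al y)"
  by (induction n) (simp_all add: al_add al0)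
lemma be_nmul: "be (nmul n y) = nmul n (be y)"
  by (induction n) (simp_all add: be_add be0)

definition Wf :: "(cls \<Rightarrow> nat) \<Rightarrow> q \<Rightarrow> q" where
  "Wf A y = nmul (A (False, False)) y + nmul (A (False, True)) (be y)
          + nmul (A (True, False)) (al y) + nmul (A (True, True)) (al (be y))"

lemma Wf_app: "al (Wf A y) + be (Wf B y) = Wf (\<lambda>k. A (amul k) + B (bmul k)) y"
  by (simp add: Wf_def amul_def bmul_def al_add be_add al_nmul be_nmul al_al be_be comm
      nmul_add algebra_simps)

lemma Wf_add: "Wf (\<lambda>k. A k + B k) y = Wf A y + Wf B y"
  by (simp add: Wf_def nmul_add algebra_simps)

lemma Wf_delta: "Wf (\<lambda>k. if k = (False, False) then 1 else 0) y = y"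
  by (simp add: Wf_def)

lemma Wf_zero: "Wf (\<lambda>k. 0) y = 0"
  by (simp add: Wf_def)

lemma al_sum: "finite V \<Longrightarrow> al (sum f V) = (\<Sum>x\<in>V. al (f x))"
  by (induction rule: finite_induct) (simp_all add: al0 al_add)
lemma be_sum: "finite V \<Longrightarrow> be (sum f V) = (\<Sum>x\<in>V. be (f x))"
  by (induction rule: finite_induct) (simp_all add: be0 be_add)

lemma represent:
  assumes "finite V" "vars t \<subseteq> V"
  shows "evv var t = (\<Sum>x\<in>V. Wf (cnt t x) (var x)) + Wf (icnt t) cc"
  using assms(2)
proof (induction t)
  case (Var n)
  have "Wf (cnt (Var n) x) (var x) = (if x = n then var n else 0)" for x
    by (simp add: Wf_def)
  then have "(\<Sum>x\<in>V. Wf (cnt (Var n) x) (var x)) = var n"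
    using Var assms(1) by simp
  moreover have "icnt (Var n) = (\<lambda>k. 0)" by auto
  ultimately show ?case by (simp del: cnt.simps icnt.simps add: Wf_zero)
next
  case (App u v)
  have IH: "evv var u = (\<Sum>x\<in>V. Wf (cnt u x) (var x)) + Wf (icnt u) cc"
    "evv var v = (\<Sum>x\<in>V. Wf (cnt v x) (var x)) + Wf (icnt v) cc"
    using App by auto
  have S: "(\<Sum>x\<in>V. Wf (cnt (App u v) x) (var x))
      = (\<Sum>x\<in>V. al (Wf (cnt u x) (var x))) + (\<Sum>x\<in>V. be (Wf (cnt v x) (var x)))"
    by (simp add: cnt_App_fun Wf_app[symmetric] sum.distrib)
  have I: "Wf (icnt (App u v)) cc = cc + (al (Wf (icnt u) cc) + be (Wf (icnt v) cc))"
    by (simp only: icnt_App_fun Wf_add Wf_app Wf_delta)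
  have "evv var (App u v) = al (evv var u) + be (evv var v) + cc" by (simp add: decomp)
  also have "\<dots> = (\<Sum>x\<in>V. Wf (cnt (App u v) x) (var x)) + Wf (icnt (App u v)) cc"
    unfolding IH S I using assms(1) by (simp add: al_add be_add al_sum be_sum algebra_simps)
  finally show ?case .
qed


abbreviation ind :: "nat \<Rightarrow> nat \<Rightarrow> int" where "ind x \<equiv> (\<lambda>n. if n = x then 1 else 0)"

lemma ev1: "eval (\<lambda>a b. a - b) (ind x) t = int (cnt t x (False,False)) + int (cnt t x (True,False))
    - int (cnt t x (False,True)) - int (cnt t x (True,True))"
  by (induction t) (auto simp: amul_def bmul_def)
lemma ev2: "eval (\<lambda>a b. - a + b) (ind x) t = int (cnt t x (False,False)) + int (cnt t x (False,True))
    - int (cnt t x (True,False)) - int (cnt t x (True,True))"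
  by (induction t) (auto simp: amul_def bmul_def)
lemma ev3: "eval (\<lambda>a b. - a - b) (ind x) t = int (cnt t x (False,False)) + int (cnt t x (True,True))
    - int (cnt t x (False,True)) - int (cnt t x (True,False))"
  by (induction t) (auto simp: amul_def bmul_def)

lemma tv1: "eval (\<lambda>a b. a - b) (\<lambda>_. 1) t = int (tcnt t (False,False)) + int (tcnt t (True,False))
    - int (tcnt t (False,True)) - int (tcnt t (True,True))"
  by (induction t) (auto simp: amul_def bmul_def)
lemma tv2: "eval (\<lambda>a b. - a + b) (\<lambda>_. 1) t = int (tcnt t (False,False)) + int (tcnt t (False,True))
    - int (tcnt t (True,False)) - int (tcnt t (True,True))"
  by (induction t) (auto simp: amul_def bmul_def)
lemma tv3: "eval (\<lambda>a b. - a - b) (\<lambda>_. 1) t = int (tcnt t (False,False)) + int (tcnt t (True,True))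
    - int (tcnt t (False,True)) - int (tcnt t (True,False))"
  by (induction t) (auto simp: amul_def bmul_def)

lemma Hrel:
  "int (icnt t (True,False)) + int (icnt t (False,True)) - int (icnt t (False,False)) = int (tcnt t (False,False)) - 1
 \<and> int (icnt t (False,False)) + int (icnt t (True,True)) - int (icnt t (True,False)) = int (tcnt t (True,False))
 \<and> int (icnt t (True,True)) + int (icnt t (False,False)) - int (icnt t (False,True)) = int (tcnt t (False,True))
 \<and> int (icnt t (False,True)) + int (icnt t (True,False)) - int (icnt t (True,True)) = int (tcnt t (True,True))"
  by (induction t) (auto simp: amul_def bmul_def)

lemma Wf_shift: "Wf (\<lambda>k. C k + n) y = Wf C y + nmul n (y + be y + al y + al (be y))"
  by (simp add: Wf_def nmul_add nmul_plus algebra_simps)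

lemma Wf_shift0: "Wf (\<lambda>k. C k + n) y = Wf C y"
proof -
  have "y + be y + al y + al (be y) = 0" using Nall[of y] by (simp add: algebra_simps)
  then show ?thesis by (simp add: Wf_shift nmul_zero)
qed

lemma Wf_eq:
  assumes "int (A (False,False)) - int (B (False,False)) = m"
    "int (A (False,True)) - int (B (False,True)) = m"
    "int (A (True,False)) - int (B (True,False)) = m"
    "int (A (True,True)) - int (B (True,True)) = m"
  shows "Wf A y = Wf B y"
proof (cases "m \<ge> 0")
  case True
  have "A = (\<lambda>k. B k + nat m)"
  proof
    fix k :: cls
    obtain p r where "k = (p, r)" by fastforce
    then show "A k = B k + nat m" using assms True by (cases p; cases r) auto
  qed
  then show ?thesis by (simp add: Wf_shift0)
next
  case False
  have "B = (\<lambda>k. A k + nat (- m))"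
  proof
    fix k :: cls
    obtain p r where "k = (p, r)" by fastforce
    then show "B k = A k + nat (- m)" using assms False by (cases p; cases r) auto
  qed
  then show ?thesis by (simp add: Wf_shift0)
qed

lemma completeness:
  assumes "(s, t) \<in> Sigma234"
  shows "derivable B234 s t"
proof -
  from assms have h1: "\<And>\<rho>. eval (\<lambda>a b. a - b) \<rho> s = eval (\<lambda>a b. a - b) \<rho> t"
    and h2: "\<And>\<rho>. eval (\<lambda>a b. - a + b) \<rho> s = eval (\<lambda>a b. - a + b) \<rho> t"
    and h3: "\<And>\<rho>. eval (\<lambda>a b. - a - b) \<rho> s = eval (\<lambda>a b. - a - b) \<rho> t"
    unfolding Sigma234_def satisfies_def mem_Collect_eq fst_conv snd_conv by blast+
  have W: "Wf (cnt s x) (var x) = Wf (cnt t x) (var x)" for x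
  proof -
    have e1: "int (cnt s x (False,False)) + int (cnt s x (True,False))
    - int (cnt s x (False,True)) - int (cnt s x (True,True)) = int (cnt t x (False,False)) + int (cnt t x (True,False))
    - int (cnt t x (False,True)) - int (cnt t x (True,True))" using h1[of "ind x"] by (simp only: ev1)
    have e2: "int (cnt s x (False,False)) + int (cnt s x (False,True))
    - int (cnt s x (True,False)) - int (cnt s x (True,True)) = int (cnt t x (False,False)) + int (cnt t x (False,True))
    - int (cnt t x (True,False)) - int (cnt t x (True,True))" using h2[of "ind x"] by (simp only: ev2)
    have e3: "int (cnt s x (False,False)) + int (cnt s x (True,True))
    - int (cnt s x (False,True)) - int (cnt s x (True,False)) = int (cnt t x (False,False)) + int (cnt t x (True,True))
    - int (cnt t x (False,True)) - int (cnt t x (True,False))" using h3[of "ind x"] by (simp only: ev3)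
    show ?thesis
      by (rule Wf_eq[where m = "int (cnt s x (False,False)) - int (cnt t x (False,False))"])
        (use e1 e2 e3 in linarith)+
  qed
  have I: "Wf (icnt s) cc = Wf (icnt t) cc"
  proof -
    have e1: "int (tcnt s (False,False)) + int (tcnt s (True,False))
    - int (tcnt s (False,True)) - int (tcnt s (True,True)) = int (tcnt t (False,False)) + int (tcnt t (True,False))
    - int (tcnt t (False,True)) - int (tcnt t (True,True))" using h1[of "\<lambda>_. 1"] by (simp only: tv1)
    have e2: "int (tcnt s (False,False)) + int (tcnt s (False,True))
    - int (tcnt s (True,False)) - int (tcnt s (True,True)) = int (tcnt t (False,False)) + int (tcnt t (False,True))
    - int (tcnt t (True,False)) - int (tcnt t (True,True))" using h2[of "\<lambda>_. 1"] by (simp only: tv2)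
    have e3: "int (tcnt s (False,False)) + int (tcnt s (True,True))
    - int (tcnt s (False,True)) - int (tcnt s (True,False)) = int (tcnt t (False,False)) + int (tcnt t (True,True))
    - int (tcnt t (False,True)) - int (tcnt t (True,False))" using h3[of "\<lambda>_. 1"] by (simp only: tv3)
    note hs = Hrel[of s] and ht = Hrel[of t]
    show ?thesis
      by (rule Wf_eq[where m = "int (icnt s (False,False)) - int (icnt t (False,False))"])
        (use e1 e2 e3 hs ht in linarith)+
  qed
  let ?V = "vars s \<union> vars t"
  have "evv var s = evv var t"
    using represent[of ?V s] represent[of ?V t] W I finite_vars by simp
  then have "abs_q s = abs_q t" by (simp add: abs_evv)
  then show ?thesis by (simp add: q.abs_eq_iff)
qed

theorem theorem7p1:
  shows "is_basis_of B234 Sigma234"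
  unfolding is_basis_of_def consequences_def
  using soundness completeness by auto

end
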